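(* Let $\alpha>-1$ and let $U_\alpha=P_\alpha[\chi]$, where $\chi(\zeta)=1$ for $\zeta\in\mathbb{T}$ with $\operatorname{Im}\zeta>0$ and $\chi(\zeta)=-1$ for $\operatorname{Im}\zeta<0$. Let $u=P_\alpha[u^\ast]$ be a real-valued $\alpha$-harmonic function with $u^\ast$ real, $|u^\ast|\le 1$ a.e. on $\mathbb{T}$, and $u(0)=0$. Then for every $z\in\mathbb{D}$, $u(z)\le U_\alpha(i|z|)$, and $$U_\alpha(ir)=\frac{c_\alpha}{2\pi}\cdot\frac{4(2+\alpha)(1-r^2)^{1+\alpha}r}{(1+r^2)^{2+\frac{\alpha}{2}}}\;{}_3F_2\!\left(\begin{matrix}1,\ 1+\frac{\alpha}{4},\ \frac32+\frac{\alpha}{4}\\ \frac32,\ \frac32\end{matrix};\frac{4r^2}{(1+r^2)^2}\right),\qquad 0\le r<1.$$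
   Context: $\mathbb{D}$ is the open unit disk, $\mathbb{T}=\partial\mathbb{D}$. For $\alpha>-1$ let $c_\alpha=\frac{\Gamma(1+\alpha/2)^2}{\Gamma(1+\alpha)}$, $K_\alpha(z)=c_\alpha\frac{(1-|z|^2)^{\alpha+1}}{|1-z|^{\alpha+2}}$, and $P_\alpha[g](z)=\frac{1}{2\pi}\int_0^{2\pi}K_\alpha(ze^{-it})g(e^{it})\,dt$. ${}_3F_2$ is the generalized hypergeometric series $\sum_{k\ge0}\frac{(a_1)_k(a_2)_k(a_3)_k}{(b_1)_k(b_2)_k\,k!}x^k$, $(y)_k=\Gamma(y+k)/\Gamma(y)$. *)

theory Defs
  imports "HOL-Analysis.Analysis"
begin

definition c_alpha :: "real \<Rightarrow> real" where
  "c_alpha \<alpha> = Gamma (1 + \<alpha>/2) ^ 2 / Gamma (1 + \<alpha>)"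

definition K_alpha :: "real \<Rightarrow> complex \<Rightarrow> real" where
  "K_alpha \<alpha> z = c_alpha \<alpha> * (1 - (cmod z)^2) powr (\<alpha> + 1) / (cmod (1 - z)) powr (\<alpha> + 2)"

definition P_alpha :: "real \<Rightarrow> (complex \<Rightarrow> real) \<Rightarrow> complex \<Rightarrow> real" where
  "P_alpha \<alpha> g z = 1 / (2*pi) *
     (LINT t:{0..2*pi}|lborel. K_alpha \<alpha> (z * cis (-t)) * g (cis t))"

definition chi :: "complex \<Rightarrow> real" where
  "chi \<zeta> = (if Im \<zeta> > 0 then 1 else if Im \<zeta> < 0 then -1 else 0)"

definition hyp3F2 :: "real \<Rightarrow> real \<Rightarrow> real \<Rightarrow> real \<Rightarrow> real \<Rightarrow> real \<Rightarrow> real" where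
  "hyp3F2 a1 a2 a3 b1 b2 x =
     (\<Sum>k. pochhammer a1 k * pochhammer a2 k * pochhammer a3 k /
          (pochhammer b1 k * pochhammer b2 k * fact k) * x ^ k)"

end

theory Submission
  imports Defs
begin


lemma sin_pow_rec:
  fixes a b :: real
  assumes "a \<le> b" "sin a = 0" "sin b = 0"
  shows "integral {a..b} (\<lambda>t. sin t ^ (n+2)) = (real n + 1) / (real n + 2) * integral {a..b} (\<lambda>t. sin t ^ n)"
proof -
  let ?F = "\<lambda>t. - (sin t ^ (n+1) * cos t)"
  let ?f = "\<lambda>t. (real n + 2) * sin t ^ (n+2) - (real n + 1) * sin t ^ n"
  have d: "(?F has_vector_derivative ?f t) (at t within {a..b})" for t
  proof -
    have cc: "cos t * (cos t * x) = x - sin t * (sin t * x)" for x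
    proof -
      have h: "x * (sin t * sin t) + x * (cos t * cos t) = x" 
        by (metis distrib_left mult.right_neutral power2_eq_square sin_cos_squared_add)
      show ?thesis using h by (simp add: algebra_simps)
    qed
    have "(?F has_real_derivative ?f t) (at t)"
      apply (rule derivative_eq_intros refl)+
      apply (simp add: algebra_simps power2_eq_square cc)
      done
    then show ?thesis
      by (metis has_real_derivative_iff_has_vector_derivative has_vector_derivative_at_within)
  qed
  have "(?f has_integral (?F b - ?F a)) {a..b}"
    by (rule fundamental_theorem_of_calculus[OF assms(1)]) (use d in auto)
  hence "(?f has_integral 0) {a..b}" using assms by simp
  hence "integral {a..b} ?f = 0" by (simp add: integral_unique)
  moreover have "integral {a..b} ?f = (real n + 2) * integral {a..b} (\<lambda>t. sin t ^ (n+2)) - (real n + 1) * integral {a..b} (\<lambda>t. sin t ^ n)"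
    by (subst integral_diff) (auto intro!: integrable_continuous_interval continuous_intros)
  ultimately show ?thesis by (simp add: field_simps)
qed

lemma int_sin1:
  fixes a b :: real
  assumes "a \<le> b"
  shows "integral {a..b} (\<lambda>t. sin t) = cos a - cos b"
proof -
  have "((\<lambda>t. sin t) has_integral ((\<lambda>t. - cos t) b - (\<lambda>t. - cos t) a)) {a..b}"
    by (rule fundamental_theorem_of_calculus[OF assms])
      (auto intro!: derivative_eq_intros simp: has_real_derivative_iff_has_vector_derivative[symmetric] has_field_derivative_at_within)
  thus ?thesis by (simp add: integral_unique)
qed

definition Iw :: "nat \<Rightarrow> real" where "Iw n = integral {0..pi} (\<lambda>t. sin t ^ n)"
definition Jw :: "nat \<Rightarrow> real" where "Jw n = integral {pi..2*pi} (\<lambda>t. sin t ^ n)"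

lemma Iw_rec: "Iw (n+2) = (real n + 1) / (real n + 2) * Iw n"
  unfolding Iw_def by (rule sin_pow_rec) auto

lemma Jw_rec: "Jw (n+2) = (real n + 1) / (real n + 2) * Jw n"
  unfolding Jw_def by (rule sin_pow_rec) auto

lemma Iw0: "Iw 0 = pi" and Jw0: "Jw 0 = pi"
  by (simp_all add: Iw_def Jw_def)

lemma Iw1: "Iw (Suc 0) = 2" and Jw1: "Jw (Suc 0) = -2"
  using int_sin1[of 0 pi] int_sin1[of pi "2*pi"] by (simp_all add: Iw_def Jw_def)

lemma Jw_Iw: "Jw n = (-1)^n * Iw n"
proof -
  have "Jw n = (-1)^n * Iw n \<and> Jw (Suc n) = (-1)^(Suc n) * Iw (Suc n)"
  proof (induction n)
    case 0 then show ?case by (simp add: Iw0 Jw0 Iw1 Jw1)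
  next
    case (Suc n)
    then show ?case using Iw_rec[of n] Jw_rec[of n] by simp
  qed
  then show ?thesis by simp
qed

lemma Iw_odd_pos: "Iw (2*k+1) > 0"
proof (induction k)
  case 0 then show ?case by (simp add: Iw1)
next
  case (Suc k)
  have "Iw (2 * Suc k + 1) = (real (2*k+1) + 1) / (real (2*k+1) + 2) * Iw (2*k+1)"
    using Iw_rec[of "2*k+1"] by (simp add: add.commute)
  then show ?case using Suc by simp
qed

lemma wallis_coeff:
  fixes \<beta> :: real
  assumes "\<beta> > 0"
  shows "pochhammer \<beta> (2*k+1) / fact (2*k+1) * Iw (2*k+1)
     = 2 * \<beta> * pochhammer ((\<beta>+1)/2) k * pochhammer ((\<beta>+2)/2) k / (pochhammer (3/2) k)^2"
proof (induction k)
  case 0 then show ?case by (simp add: Iw1)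
next
  case (Suc k)
  have e1: "pochhammer \<beta> (2 * Suc k + 1) = pochhammer \<beta> (2*k+1) * (\<beta> + 2*k+1) * (\<beta> + 2*k+2)"
    by (simp add: pochhammer_Suc algebra_simps)
  have e2: "fact (2 * Suc k + 1) = (fact (2*k+1) :: real) * (2*k+2) * (2*k+3)"
    by (simp add: algebra_simps)
  have e3: "Iw (2 * Suc k + 1) = (2*k+2) / (2*k+3) * Iw (2*k+1)"
    using Iw_rec[of "2*k+1"] by (simp add: add.commute add.left_commute)
  have p1: "pochhammer ((\<beta>+1)/2) (Suc k) = pochhammer ((\<beta>+1)/2) k * ((\<beta>+2*k+1)/2)"
    by (simp add: pochhammer_Suc field_simps)
  have p2: "pochhammer ((\<beta>+2)/2) (Suc k) = pochhammer ((\<beta>+2)/2) k * ((\<beta>+2*k+2)/2)"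
    by (simp add: pochhammer_Suc field_simps)
  have p3: "pochhammer (3/2::real) (Suc k) = pochhammer (3/2) k * ((2*k+3)/2)"
    by (simp add: pochhammer_Suc field_simps)
  have pos: "pochhammer (3/2::real) k > 0" "(fact (2*k+1) :: real) > 0"
    by (auto intro: pochhammer_pos)
  have "pochhammer \<beta> (2 * Suc k + 1) / fact (2 * Suc k + 1) * Iw (2 * Suc k + 1)
      = (pochhammer \<beta> (2*k+1) / fact (2*k+1) * Iw (2*k+1)) * ((\<beta> + 2*k+1) * (\<beta> + 2*k+2) / (2*k+3)^2)"
  proof -
    have gen: "\<And>(P::real) (F::real) (I::real). F > 0 \<Longrightarrow> P * (\<beta> + 2*k+1) * (\<beta> + 2*k+2) / (F * (2*k+2) * (2*k+3)) * ((2*k+2) / (2*k+3) * I)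
         = (P / F * I) * ((\<beta> + 2*k+1) * (\<beta> + 2*k+2) / (2*k+3)^2)"
    proof -
      fix P F I :: real assume F: "F > 0"
      have a: "(2*real k+2) \<noteq> 0" "(2*real k+3) \<noteq> 0" by linarith+
      show "P * (\<beta> + 2*k+1) * (\<beta> + 2*k+2) / (F * (2*k+2) * (2*k+3)) * ((2*k+2) / (2*k+3) * I)
         = (P / F * I) * ((\<beta> + 2*k+1) * (\<beta> + 2*k+2) / (2*k+3)^2)"
        using F a by (simp add: divide_simps power2_eq_square)
    qed
    show ?thesis unfolding e1 e2 e3 by (rule gen) (rule pos(2))
  qed
  also have "\<dots> = 2 * \<beta> * pochhammer ((\<beta>+1)/2) (Suc k) * pochhammer ((\<beta>+2)/2) (Suc k) / (pochhammer (3/2) (Suc k))^2"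
  proof -
    have gen: "\<And>(A::real) (B::real) (Q::real). Q > 0 \<Longrightarrow> 2 * \<beta> * A * B / Q^2 * ((\<beta> + 2*k+1) * (\<beta> + 2*k+2) / (2*k+3)^2)
       = 2 * \<beta> * (A * ((\<beta>+2*k+1)/2)) * (B * ((\<beta>+2*k+2)/2)) / (Q * ((2*k+3)/2))^2"
    proof -
      fix A B Q :: real assume Q: "Q > 0"
      have a: "(2*real k+3) \<noteq> 0" by linarith
      show "2 * \<beta> * A * B / Q^2 * ((\<beta> + 2*k+1) * (\<beta> + 2*k+2) / (2*k+3)^2)
       = 2 * \<beta> * (A * ((\<beta>+2*k+1)/2)) * (B * ((\<beta>+2*k+2)/2)) / (Q * ((2*k+3)/2))^2"
        using Q a by (simp add: divide_simps power2_eq_square)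
    qed
    show ?thesis unfolding Suc p1 p2 p3 by (rule gen) (rule pos(1))
  qed
  finally show ?case .
qed

lemma binom_neg:
  fixes y \<beta> :: real
  assumes "\<bar>y\<bar> < 1"
  shows "(\<lambda>n. pochhammer \<beta> n / fact n * y^n) sums (1 - y) powr (-\<beta>)"
proof -
  have "(\<lambda>n. ((-\<beta>) gchoose n) * (-y)^n) sums (1 + -y) powr (-\<beta>)"
    by (rule gen_binomial_real) (use assms in simp)
  moreover have "((-\<beta>) gchoose n) * (-y)^n = pochhammer \<beta> n / fact n * y^n" for n
  proof -
    have "((-\<beta>) gchoose n) * (-y)^n = ((-1)^n * (-1)^n) * (pochhammer \<beta> n / fact n * y^n)"
      by (simp add: gbinomial_pochhammer power_minus[of y])
    also have "(-1::real)^n * (-1)^n = 1" by (simp add: power_mult_distrib[symmetric])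
    finally show ?thesis by simp
  qed
  ultimately show ?thesis by simp
qed

lemma series_int:
  fixes x \<beta> a b :: real
  assumes x: "0 \<le> x" "x < 1" and \<beta>: "\<beta> > 0" and ab: "a \<le> b"
  shows "(\<lambda>n. pochhammer \<beta> n / fact n * x^n * integral {a..b} (\<lambda>t. sin t ^ n))
           sums integral {a..b} (\<lambda>t. (1 - x * sin t) powr (-\<beta>))"
proof -
  define f where "f = (\<lambda>n t. pochhammer \<beta> n / fact n * x^n * sin t ^ n)"
  have bpos: "pochhammer \<beta> n / fact n * x^n \<ge> 0" for n
    using \<beta> x by (intro mult_nonneg_nonneg divide_nonneg_pos pochhammer_nonneg) auto
  have summ: "summable (\<lambda>n. pochhammer \<beta> n / fact n * x^n)"
    using binom_neg[of x \<beta>] x by (auto simp: sums_iff)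
  have bnd: "norm (f n t) \<le> pochhammer \<beta> n / fact n * x^n" for n t
  proof -
    have "\<bar>sin t ^ n\<bar> \<le> 1" unfolding power_abs by (rule power_le_one) auto
    then have "(pochhammer \<beta> n / fact n * x^n) * \<bar>sin t ^ n\<bar> \<le> pochhammer \<beta> n / fact n * x^n"
      using bpos[of n] mult_left_le[of "\<bar>sin t ^ n\<bar>" "pochhammer \<beta> n / fact n * x^n"] by blast
    moreover have "norm (f n t) = (pochhammer \<beta> n / fact n * x^n) * \<bar>sin t ^ n\<bar>"
      unfolding f_def real_norm_def
      by (simp only: abs_mult[of "pochhammer \<beta> n / fact n * x^n" "sin t ^ n"] abs_of_nonneg[OF bpos[of n]])
    ultimately show ?thesis by simp
  qed
  have ul: "uniform_limit {a..b} (\<lambda>N t. \<Sum>n<N. f n t) (\<lambda>t. suminf (\<lambda>n. f n t)) sequentially"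
    by (rule Weierstrass_m_test[OF _ summ]) (rule bnd)
  have lim: "suminf (\<lambda>n. f n t) = (1 - x * sin t) powr (-\<beta>)" for t
  proof -
    have "\<bar>x * sin t\<bar> < 1"
    proof -
      have "\<bar>x * sin t\<bar> = x * \<bar>sin t\<bar>" using x by (simp add: abs_mult)
      also have "\<dots> \<le> x" using x by (simp add: mult_left_le)
      finally show ?thesis using x by simp
    qed
    from binom_neg[OF this, of \<beta>] show ?thesis unfolding f_def by (simp add: sums_iff power_mult_distrib mult.assoc)
  qed
  have cont: "continuous_on {a..b} (\<lambda>t. \<Sum>n<N. f n t)" for N
    unfolding f_def by (intro continuous_intros)
  obtain I J where I: "\<And>N. ((\<lambda>t. \<Sum>n<N. f n t) has_integral I N) {a..b}"
    and J: "((\<lambda>t. suminf (\<lambda>n. f n t)) has_integral J) {a..b}" and IJ: "I \<longlonglongrightarrow> J"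
    using uniform_limit_integral[OF ul cont] by auto
  have Ieq0: "I N = (\<Sum>n<N. pochhammer \<beta> n / fact n * x^n * integral {a..b} (\<lambda>t. sin t ^ n))" for N
  proof -
    have "((\<lambda>t. \<Sum>n<N. f n t) has_integral (\<Sum>n<N. pochhammer \<beta> n / fact n * x^n * integral {a..b} (\<lambda>t. sin t ^ n))) {a..b}"
      unfolding f_def
      by (intro has_integral_sum has_integral_mult_right integrable_integral integrable_continuous_interval continuous_intros) auto
    then show ?thesis using I[of N] by (rule has_integral_unique[symmetric])
  qed
  have "J = integral {a..b} (\<lambda>t. (1 - x * sin t) powr (-\<beta>))"
    using J lim by (simp add: integral_unique)
  moreover have "I = (\<lambda>N. \<Sum>n<N. pochhammer \<beta> n / fact n * x^n * integral {a..b} (\<lambda>t. sin t ^ n))"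
    using Ieq0 by (rule ext)
  ultimately show ?thesis using IJ unfolding sums_def by simp
qed

lemma diff_series:
  fixes x \<beta> :: real
  assumes x: "0 \<le> x" "x < 1" and \<beta>: "\<beta> > 0"
  shows "integral {0..pi} (\<lambda>t. (1 - x * sin t) powr (-\<beta>)) - integral {pi..2*pi} (\<lambda>t. (1 - x * sin t) powr (-\<beta>))
     = 4 * \<beta> * x * hyp3F2 1 ((\<beta>+1)/2) ((\<beta>+2)/2) (3/2) (3/2) (x^2)"
proof -
  define D where "D = integral {0..pi} (\<lambda>t. (1 - x * sin t) powr (-\<beta>)) - integral {pi..2*pi} (\<lambda>t. (1 - x * sin t) powr (-\<beta>))"
  define F where "F = (\<lambda>n. pochhammer \<beta> n / fact n * x^n * (Iw n - Jw n))"
  have "F sums D"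
    unfolding F_def D_def right_diff_distrib
    by (rule sums_diff) (unfold Iw_def Jw_def, (rule series_int; use x \<beta> in simp)+)
  moreover have "strict_mono (\<lambda>k::nat. 2*k+1)" by (rule strict_monoI) simp
  moreover have "F n = 0" if "n \<notin> range (\<lambda>k::nat. 2*k+1)" for n
  proof -
    have "even n" using that by (metis oddE rangeI)
    then show ?thesis unfolding F_def Jw_Iw by simp
  qed
  ultimately have S: "(\<lambda>k. F (2*k+1)) sums D" using sums_mono_reindex by blast
  define h where "h = (\<lambda>k. pochhammer 1 k * pochhammer ((\<beta>+1)/2) k * pochhammer ((\<beta>+2)/2) k /
          (pochhammer (3/2) k * pochhammer (3/2) k * fact k) * (x^2)^k)"
  have Fk: "F (2*k+1) = 4 * \<beta> * x * h k" for k
  proof -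
    have "F (2*k+1) = 2 * x * (x^2)^k * (pochhammer \<beta> (2*k+1) / fact (2*k+1) * Iw (2*k+1))"
      unfolding F_def Jw_Iw by (simp add: power_mult power2_eq_square algebra_simps)
    also have "\<dots> = 4 * \<beta> * x * h k"
      unfolding wallis_coeff[OF \<beta>] h_def pochhammer_fact[symmetric]
      by (simp add: power2_eq_square field_simps)
    finally show ?thesis .
  qed
  have "D = 4 * \<beta> * x * suminf h"
  proof (cases "x = 0")
    case True
    then have "(\<lambda>k. F (2*k+1)) = (\<lambda>k. 0)" using Fk by simp
    then show ?thesis using S True by (simp add: sums_iff)
  next
    case False
    have "(\<lambda>k. 4 * \<beta> * x * h k) sums D" using S Fk by simp
    from sums_divide[OF this, of "4 * \<beta> * x"] have "h sums (D / (4 * \<beta> * x))"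
      using False \<beta> by simp
    then show ?thesis using False \<beta> by (simp add: sums_iff)
  qed
  then show ?thesis unfolding D_def h_def hyp3F2_def .
qed

lemma periodic_shift0:
  fixes g :: "real \<Rightarrow> real"
  assumes g: "continuous_on UNIV g" and per: "\<And>t. g (t + 2*pi) = g t"
    and c: "0 \<le> c" "c \<le> 2*pi"
  shows "integral {0..2*pi} (\<lambda>t. g (t + c)) = integral {0..2*pi} g"
proof -
  have int: "g integrable_on {a..b}" for a b
    by (rule integrable_continuous_interval) (rule continuous_on_subset[OF g], simp)
  have "integral {0..2*pi} (\<lambda>t. g (t + c)) = integral {c..2*pi+c} g"
    using integral_shift_real_ivl[where a=c and b="2*pi+c" and c=c and f=g] by simp
  also have "\<dots> = integral {c..2*pi} g + integral {2*pi..2*pi+c} g"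
    using c by (intro Henstock_Kurzweil_Integration.integral_combine[symmetric] int) auto
  also have "integral {2*pi..2*pi+c} g = integral {0..c} (\<lambda>x. g (x + 2*pi))"
    using integral_shift_real_ivl[where a="2*pi" and b="2*pi+c" and c="2*pi" and f=g] by simp
  also have "\<dots> = integral {0..c} g" using per by simp
  also have "integral {c..2*pi} g + integral {0..c} g = integral {0..2*pi} g"
    using c Henstock_Kurzweil_Integration.integral_combine[of 0 c "2*pi" g] int by simp
  finally show ?thesis .
qed

lemma periodic_shift:
  fixes g :: "real \<Rightarrow> real"
  assumes g: "continuous_on UNIV g" and per: "\<And>t. g (t + 2*pi) = g t"
    and c: "-2*pi \<le> c" "c \<le> 2*pi"
  shows "integral {0..2*pi} (\<lambda>t. g (t + c)) = integral {0..2*pi} g"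
proof (cases "c \<ge> 0")
  case True then show ?thesis using periodic_shift0[OF g per] c by simp
next
  case False
  have "(\<lambda>t. g (t + c)) = (\<lambda>t. g (t + (c + 2*pi)))"
    using per by (metis add.assoc)
  then show ?thesis using periodic_shift0[OF g per, of "c + 2*pi"] c False by simp
qed

definition kern :: "real \<Rightarrow> real \<Rightarrow> real \<Rightarrow> real" where
  "kern \<alpha> r y = c_alpha \<alpha> * (1 - r^2) powr (\<alpha>+1) / (1 + r^2 - 2*r*y) powr (1 + \<alpha>/2)"


lemma K_eq: "K_alpha \<alpha> w = c_alpha \<alpha> * (1 - (cmod w)^2) powr (\<alpha> + 1) / (1 + (cmod w)^2 - 2 * Re w) powr (1 + \<alpha>/2)"
proof -
  have sq: "(cmod (1 - w))^2 = 1 + (cmod w)^2 - 2 * Re w"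
    unfolding cmod_power2 by (simp add: power2_eq_square algebra_simps)
  have "cmod (1 - w) powr (\<alpha> + 2) = ((cmod (1 - w))^2) powr (1 + \<alpha>/2)"
  proof (cases "cmod (1 - w) = 0")
    case True then show ?thesis by (simp only: True) simp
  next
    case False
    then have "(cmod (1 - w))^2 = cmod (1 - w) powr 2" by (simp add: powr_realpow)
    then have h: "((cmod (1 - w))^2) powr (1 + \<alpha>/2) = cmod (1 - w) powr (2 * (1 + \<alpha>/2))"
      by (simp only: powr_powr)
    have e: "\<alpha> + 2 = 2 * (1 + \<alpha>/2)" by simp
    show ?thesis by (metis h e)
  qed
  then show ?thesis unfolding K_alpha_def sq by simp
qed

lemma K_rot: "K_alpha \<alpha> (z * cis (-t)) = kern \<alpha> (cmod z) (cos (t - Arg z))"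
proof -
  have "z * cis (-t) = complex_of_real (cmod z) * cis (Arg z - t)"
    by (subst (1) rcis_cmod_Arg[symmetric]) (simp add: rcis_def cis_mult)
  then have "Re (z * cis (-t)) = cmod z * cos (t - Arg z)" "cmod (z * cis (-t)) = cmod z"
    by (simp_all add: cos_diff norm_mult)
  then show ?thesis unfolding K_eq kern_def by (simp add: algebra_simps)
qed

lemma K_imag: 
  assumes "r \<ge> 0" shows "K_alpha \<alpha> (\<i> * complex_of_real r * cis (-t)) = kern \<alpha> r (sin t)"
proof -
  have "Re (\<i> * complex_of_real r * cis (-t)) = r * sin t" by (simp add: cis.ctr)
  moreover have "cmod (\<i> * complex_of_real r * cis (-t)) = r" using assms by (simp add: norm_mult)
  ultimately show ?thesis unfolding K_eq kern_def by (simp add: algebra_simps)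
qed

lemma kern_base_pos:
  fixes r y :: real
  assumes "0 \<le> r" "r < 1" "\<bar>y\<bar> \<le> 1"
  shows "1 + r^2 - 2*r*y > 0"
proof -
  have "y \<le> 1" using assms by (simp add: abs_le_iff)
  hence "r*y \<le> r*1" using assms(1) by (rule mult_left_mono)
  moreover have "(1 - r)^2 > 0" using assms by simp
  ultimately show ?thesis by (simp add: power2_eq_square algebra_simps)
qed

lemma kern_mono:
  assumes "\<alpha> > -1" "0 \<le> r" "r < 1" "\<bar>y1\<bar> \<le> 1" "\<bar>y2\<bar> \<le> 1" "y1 \<le> y2"
  shows "kern \<alpha> r y1 \<le> kern \<alpha> r y2"
proof -
  have c: "c_alpha \<alpha> * (1 - r^2) powr (\<alpha>+1) \<ge> 0"
    unfolding c_alpha_def using assms by (auto intro!: mult_nonneg_nonneg divide_nonneg_nonneg Gamma_real_nonneg)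
  have b1: "1 + r^2 - 2*r * y1 > 0" "1 + r^2 - 2*r * y2 > 0" using kern_base_pos assms by auto
  have "1 + r^2 - 2*r * y2 \<le> 1 + r^2 - 2*r * y1" using assms mult_left_mono[of y1 y2 "2*r"] by auto
  then have "(1 + r^2 - 2*r * y2) powr (1 + \<alpha>/2) \<le> (1 + r^2 - 2*r * y1) powr (1 + \<alpha>/2)"
    using b1 assms by (intro powr_mono2) auto
  moreover have "(1 + r^2 - 2*r * y2) powr (1 + \<alpha>/2) > 0" using b1 by simp
  moreover have "(1 + r^2 - 2*r * y1) powr (1 + \<alpha>/2) > 0" using b1 by simp
  ultimately show ?thesis unfolding kern_def using c
    by (intro divide_left_mono) auto
qed

lemma kern_cont:
  assumes "0 \<le> r" "r < 1" "continuous_on UNIV h" "\<And>t. \<bar>h t\<bar> \<le> 1"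
  shows "continuous_on UNIV (\<lambda>t. kern \<alpha> r (h t))"
proof -
  have pos: "1 + r^2 - 2*r*h t \<noteq> 0" for t using kern_base_pos[OF assms(1,2) assms(4)[of t]] by linarith
  have pos2: "(1 + r^2 - 2*r*h t) powr (1 + \<alpha>/2) \<noteq> 0" for t using pos[of t] by simp
  show ?thesis unfolding kern_def
    by (intro continuous_intros assms(3)) (use pos pos2 in blast)+
qed

lemma chi_cis_meas: "(\<lambda>t. chi (cis t)) \<in> borel_measurable borel"
proof -
  have "(\<lambda>t. chi (cis t)) = (\<lambda>t. if sin t > 0 then 1 else if sin t < 0 then -1 else (0::real))"
    by (simp add: chi_def fun_eq_iff)
  also have "\<dots> \<in> borel_measurable borel" by measurable
  finally show ?thesis .
qed

lemma chi_bound: "\<bar>chi z\<bar> \<le> 1"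
  unfolding chi_def by auto

lemma chi_pos: "0 < t \<Longrightarrow> t < pi \<Longrightarrow> chi (cis t) = 1"
  unfolding chi_def by (simp add: sin_gt_zero)

lemma chi_neg: "pi < t \<Longrightarrow> t < 2*pi \<Longrightarrow> chi (cis t) = -1"
  unfolding chi_def using sin_lt_zero[of t] by simp

lemma cont_set_integrable:
  fixes f :: "real \<Rightarrow> real"
  assumes "continuous_on UNIV f"
  shows "set_integrable lborel {a..b} f"
  unfolding set_integrable_def
  by (rule borel_integrable_compact) (auto intro: continuous_on_subset[OF assms])

lemma chi_split:
  fixes f :: "real \<Rightarrow> real"
  assumes f: "continuous_on UNIV f"
  shows "set_integrable lborel {0..2*pi} (\<lambda>t. f t * chi (cis t))"
    "(LINT t:{0..2*pi}|lborel. f t * chi (cis t)) = integral {0..pi} f - integral {pi..2*pi} f"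
proof -
  have fm: "f \<in> borel_measurable borel" by (rule borel_measurable_continuous_onI[OF f])
  show si: "set_integrable lborel {0..2*pi} (\<lambda>t. f t * chi (cis t))"
  proof (rule set_integrable_bound[OF cont_set_integrable[OF f]])
    show "set_borel_measurable lborel {0..2*pi} (\<lambda>t. f t * chi (cis t))"
      unfolding set_borel_measurable_def using fm chi_cis_meas by measurable
    show "AE x in lborel. x \<in> {0..2*pi} \<longrightarrow> norm (f x * chi (cis x)) \<le> norm (f x)"
      using chi_bound by (auto simp: abs_mult intro!: mult_left_le)
  qed
  note eq = set_borel_integral_eq_integral[OF si]
  have fi: "f integrable_on {a..b}" for a b
    by (rule integrable_continuous_interval) (rule continuous_on_subset[OF f], simp)
  have "integral {0..2*pi} (\<lambda>t. f t * chi (cis t)) = integral {0..pi} (\<lambda>t. f t * chi (cis t)) + integral {pi..2*pi} (\<lambda>t. f t * chi (cis t))"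
    using eq(1) by (intro Henstock_Kurzweil_Integration.integral_combine[symmetric]) auto
  also have "integral {0..pi} (\<lambda>t. f t * chi (cis t)) = integral {0..pi} f"
    by (rule integral_spike[of "{0,pi}"]) (auto simp: chi_pos)
  also have "integral {pi..2*pi} (\<lambda>t. f t * chi (cis t)) = integral {pi..2*pi} (\<lambda>t. - f t)"
    by (rule integral_spike[of "{pi,2*pi}"]) (auto simp: chi_neg)
  also have "\<dots> = - integral {pi..2*pi} f" by (rule integral_neg)
  finally show "(LINT t:{0..2*pi}|lborel. f t * chi (cis t)) = integral {0..pi} f - integral {pi..2*pi} f"
    using eq(2) by simp
qed

lemma part2:
  fixes \<alpha> r :: real
  assumes \<alpha>: "\<alpha> > -1" and r: "0 \<le> r" "r < 1"
  shows "P_alpha \<alpha> chi (\<i> * complex_of_real r) =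
              c_alpha \<alpha> / (2*pi) *
              (4 * (2 + \<alpha>) * (1 - r^2) powr (1 + \<alpha>) * r / (1 + r^2) powr (2 + \<alpha>/2)) *
              hyp3F2 1 (1 + \<alpha>/4) (3/2 + \<alpha>/4) (3/2) (3/2) (4 * r^2 / (1 + r^2)^2)"
proof -
  define \<beta> where "\<beta> = 1 + \<alpha>/2"
  define x where "x = 2*r / (1 + r^2)"
  define C where "C = c_alpha \<alpha> * (1 - r^2) powr (\<alpha>+1)"
  define g where "g = (\<lambda>t. (1 - x * sin t) powr (-\<beta>))"
  define H where "H = hyp3F2 1 (1 + \<alpha>/4) (3/2 + \<alpha>/4) (3/2) (3/2) (4 * r^2 / (1 + r^2)^2)"
  have \<beta>: "\<beta> > 0" using \<alpha> unfolding \<beta>_def by simp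
  have q: "1 + r^2 > 0" by (simp add: add_pos_nonneg)
  have x: "0 \<le> x" "x < 1"
  proof -
    show "0 \<le> x" unfolding x_def using r by simp
    have "(1 - r)^2 > 0" using r by simp
    then have "2*r < 1 + r^2" by (simp add: power2_eq_square algebra_simps)
    then show "x < 1" unfolding x_def using q by simp
  qed
  have ks: "kern \<alpha> r (sin t) = C * (1 + r^2) powr (-\<beta>) * g t" for t
  proof -
    have b: "1 + r^2 - 2*r * sin t = (1 + r^2) * (1 - x * sin t)"
      unfolding x_def using q by (simp add: field_simps)
    have p: "1 - x * sin t > 0" using kern_base_pos[OF r, of "sin t"] q unfolding b
      by (simp add: zero_less_mult_iff)
    have "(1 + r^2 - 2*r * sin t) powr \<beta> = (1 + r^2) powr \<beta> * (1 - x * sin t) powr \<beta>"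
      unfolding b using p q by (simp add: powr_mult)
    then show ?thesis unfolding kern_def C_def g_def \<beta>_def[symmetric]
      by (simp add: powr_minus divide_inverse)
  qed
  have gc: "continuous_on UNIV g"
  proof -
    have "1 - x * sin t \<noteq> 0" for t
    proof -
      have "x * sin t \<le> x * 1" using x by (intro mult_left_mono) auto
      then show ?thesis using x by simp
    qed
    then show ?thesis unfolding g_def by (intro continuous_intros) auto
  qed
  have kc: "continuous_on UNIV (\<lambda>t. kern \<alpha> r (sin t))"
    unfolding ks by (intro continuous_intros gc)
  have "P_alpha \<alpha> chi (\<i> * complex_of_real r) = 1/(2*pi) * (LINT t:{0..2*pi}|lborel. kern \<alpha> r (sin t) * chi (cis t))"
    unfolding P_alpha_def K_imag[OF r(1)] ..
  also have "\<dots> = 1/(2*pi) * (integral {0..pi} (\<lambda>t. kern \<alpha> r (sin t)) - integral {pi..2*pi} (\<lambda>t. kern \<alpha> r (sin t)))"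
    using chi_split(2)[OF kc] by simp
  also have "\<dots> = 1/(2*pi) * (C * (1 + r^2) powr (-\<beta>) * (integral {0..pi} g - integral {pi..2*pi} g))"
    unfolding ks by (simp add: right_diff_distrib)
  also have "integral {0..pi} g - integral {pi..2*pi} g = 4 * \<beta> * x * H"
  proof -
    have a: "(\<beta>+1)/2 = 1 + \<alpha>/4" "(\<beta>+2)/2 = 3/2 + \<alpha>/4" "x^2 = 4 * r^2 / (1 + r^2)^2"
      unfolding \<beta>_def x_def by (simp_all add: power_divide field_simps)
    show ?thesis unfolding g_def H_def using diff_series[OF x \<beta>] unfolding a .
  qed
  finally have P: "P_alpha \<alpha> chi (\<i> * complex_of_real r) = 1/(2*pi) * (C * (1 + r^2) powr (-\<beta>) * (4 * \<beta> * x * H))" .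
  have e: "(1 + r^2) powr (2 + \<alpha>/2) = (1 + r^2) * (1 + r^2) powr \<beta>"
  proof -
    have "2 + \<alpha>/2 = 1 + (1 + \<alpha>/2)" by simp
    then have "(1 + r^2) powr (2 + \<alpha>/2) = (1 + r^2) powr 1 * (1 + r^2) powr (1 + \<alpha>/2)"
      by (simp only: powr_add)
    then show ?thesis unfolding \<beta>_def using q by simp
  qed
  have pp: "(1 + r^2) powr \<beta> > 0" using q by simp
  have gen: "\<And>(P::real) (Q::real) (D::real). P > 0 \<Longrightarrow> Q > 0 \<Longrightarrow>
     1/(2*pi) * (c_alpha \<alpha> * D * inverse P * (4 * (1 + \<alpha>/2) * (2*r/Q) * H))
     = c_alpha \<alpha> / (2*pi) * (4 * (2 + \<alpha>) * D * r / (Q * P)) * H"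
    by (simp add: field_simps)
  show ?thesis unfolding P e H_def[symmetric] C_def x_def powr_minus \<beta>_def[symmetric]
    using gen[OF pp q, of "(1 - r^2) powr (1 + \<alpha>)"] by (simp add: add.commute \<beta>_def)
qed

lemma sin_le0: "pi \<le> t \<Longrightarrow> t \<le> 2*pi \<Longrightarrow> sin t \<le> 0"
  by (cases "t = 2*pi") (auto intro: sin_le_zero)

lemma c_alpha_pos:
  assumes "(\<alpha>::real) > -1" shows "c_alpha \<alpha> > 0"
proof -
  have "Gamma (1+\<alpha>/2) > 0" "Gamma (1+\<alpha>) > 0" using assms by auto
  then show ?thesis by (simp add: c_alpha_def)
qed

lemma part1:
  fixes \<alpha> :: real and ustar :: "complex \<Rightarrow> real" and z :: complex
  assumes \<alpha>: "\<alpha> > -1"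
    and meas: "(\<lambda>t. ustar (cis t)) \<in> borel_measurable lborel"
    and bnd: "AE t in lborel. t \<in> {0..2*pi} \<longrightarrow> \<bar>ustar (cis t)\<bar> \<le> 1"
    and P0: "P_alpha \<alpha> ustar 0 = 0"
    and z: "cmod z < 1"
  shows "P_alpha \<alpha> ustar z \<le> P_alpha \<alpha> chi (\<i> * complex_of_real (cmod z))"
proof -
  define r where "r = cmod z"
  define \<theta> where "\<theta> = Arg z"
  have r: "0 \<le> r" "r < 1" using z unfolding r_def by auto
  define u where "u = (\<lambda>t. ustar (cis t))"
  define k where "k = (\<lambda>t. kern \<alpha> r (cos (t - \<theta>)))"
  define ks where "ks = (\<lambda>t. kern \<alpha> r (sin t))"
  define m where "m = kern \<alpha> r 0"
  have kc: "continuous_on UNIV k" unfolding k_def by (rule kern_cont[OF r]) (auto intro!: continuous_intros)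
  have ksc: "continuous_on UNIV ks" unfolding ks_def by (rule kern_cont[OF r]) (auto intro!: continuous_intros)
  have um: "u \<in> borel_measurable borel" using meas unfolding u_def by simp
  have intu: "set_integrable lborel {0..2*pi} (\<lambda>t. f t * u t)" if f: "continuous_on UNIV f" for f
  proof (rule set_integrable_bound[OF cont_set_integrable[OF f]])
    have "f \<in> borel_measurable borel" by (rule borel_measurable_continuous_onI[OF f])
    then show "set_borel_measurable lborel {0..2*pi} (\<lambda>t. f t * u t)"
      unfolding set_borel_measurable_def using um by measurable
    show "AE x in lborel. x \<in> {0..2*pi} \<longrightarrow> norm (f x * u x) \<le> norm (f x)"
      using bnd unfolding u_def
    proof eventually_elim
      case (elim x)
      show ?case
      proof
        assume "x \<in> {0..2*pi}"
        with elim have h: "\<bar>ustar (cis x)\<bar> \<le> 1" by simp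
        have "norm (f x * ustar (cis x)) = \<bar>f x\<bar> * \<bar>ustar (cis x)\<bar>" by (simp add: abs_mult)
        also have "\<dots> \<le> \<bar>f x\<bar> * 1" using h by (intro mult_left_mono) auto
        finally show "norm (f x * ustar (cis x)) \<le> norm (f x)" by simp
      qed
    qed
  qed
  have intu1: "set_integrable lborel {0..2*pi} u" using intu[of "\<lambda>_. 1"] by simp
  have u0: "(LINT t:{0..2*pi}|lborel. u t) = 0"
  proof -
    have "K_alpha \<alpha> (0 * cis (-t)) = c_alpha \<alpha>" for t unfolding K_alpha_def by simp
    then have "1/(2*pi) * (c_alpha \<alpha> * (LINT t:{0..2*pi}|lborel. u t)) = 0"
      using P0 unfolding P_alpha_def u_def by simp
    then show ?thesis using c_alpha_pos[OF \<alpha>] by simp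
  qed
  have Peq: "P_alpha \<alpha> ustar z = 1/(2*pi) * (LINT t:{0..2*pi}|lborel. k t * u t)"
    unfolding P_alpha_def K_rot k_def u_def r_def \<theta>_def ..
  have "(LINT t:{0..2*pi}|lborel. k t * u t) \<le> (LINT t:{0..2*pi}|lborel. \<bar>k t - m\<bar> + m * u t)"
  proof (rule set_integral_mono_AE)
    show "set_integrable lborel {0..2*pi} (\<lambda>t. k t * u t)" by (rule intu[OF kc])
    show "set_integrable lborel {0..2*pi} (\<lambda>t. \<bar>k t - m\<bar> + m * u t)"
    proof -
      have kmc: "continuous_on UNIV (\<lambda>t. \<bar>k t - m\<bar>)" by (intro continuous_intros kc)
      show ?thesis by (rule set_integral_add(1)[OF cont_set_integrable[OF kmc] set_integrable_mult_right[OF intu1]])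
    qed
    show "AE t\<in>{0..2*pi} in lborel. k t * u t \<le> \<bar>k t - m\<bar> + m * u t"
      using bnd unfolding u_def
    proof eventually_elim
      case (elim t)
      show ?case
      proof
        assume "t \<in> {0..2*pi}"
        with elim have "\<bar>ustar (cis t)\<bar> \<le> 1" by simp
        then have "\<bar>k t - m\<bar> * \<bar>ustar (cis t)\<bar> \<le> \<bar>k t - m\<bar>"
          using mult_left_mono[of "\<bar>ustar (cis t)\<bar>" 1 "\<bar>k t - m\<bar>"] by simp
        then have "(k t - m) * ustar (cis t) \<le> \<bar>k t - m\<bar>"
          using abs_ge_self[of "(k t - m) * ustar (cis t)"] unfolding abs_mult by linarith
        then show "k t * ustar (cis t) \<le> \<bar>k t - m\<bar> + m * ustar (cis t)"
          by (simp add: algebra_simps)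
      qed
    qed
  qed
  also have "(LINT t:{0..2*pi}|lborel. \<bar>k t - m\<bar> + m * u t) = (LINT t:{0..2*pi}|lborel. \<bar>k t - m\<bar>)"
  proof -
    have kmc: "continuous_on UNIV (\<lambda>t. \<bar>k t - m\<bar>)" by (intro continuous_intros kc)
    show ?thesis
      using u0 by (subst set_integral_add(2)[OF cont_set_integrable[OF kmc] set_integrable_mult_right[OF intu1]]) simp
  qed
  also have "\<dots> = integral {0..2*pi} (\<lambda>t. \<bar>k t - m\<bar>)"
    by (intro set_borel_integral_eq_integral(2) cont_set_integrable continuous_intros kc)
  also have "\<dots> = integral {0..2*pi} (\<lambda>t. \<bar>ks t - m\<bar>)"
  proof -
    define G where "G = (\<lambda>t. \<bar>kern \<alpha> r (cos t) - m\<bar>)"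
    have Gc: "continuous_on UNIV G" unfolding G_def
      by (intro continuous_intros kern_cont[OF r]) (auto intro!: continuous_intros)
    have Gp: "G (t + 2*pi) = G t" for t unfolding G_def by simp
    have "(\<lambda>t. \<bar>k t - m\<bar>) = (\<lambda>t. G (t + (-\<theta>)))" unfolding G_def k_def by simp
    moreover have "(\<lambda>t. \<bar>ks t - m\<bar>) = (\<lambda>t. G (t + (-(pi/2))))" unfolding G_def ks_def
      by (simp add: cos_diff)
    moreover have "-2*pi \<le> -\<theta>" "-\<theta> \<le> 2*pi" using Arg_bounded[of z] unfolding \<theta>_def by auto
    ultimately show ?thesis using periodic_shift[OF Gc Gp, of "-\<theta>"] periodic_shift[OF Gc Gp, of "-(pi/2)"]
      by simp
  qed
  also have "\<dots> = integral {0..pi} ks - integral {pi..2*pi} ks"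
  proof -
    have ii: "f integrable_on {a..b}" if "continuous_on UNIV f" for f :: "real \<Rightarrow> real" and a b
      by (rule integrable_continuous_interval) (rule continuous_on_subset[OF that], simp)
    have "integral {0..2*pi} (\<lambda>t. \<bar>ks t - m\<bar>) = integral {0..pi} (\<lambda>t. \<bar>ks t - m\<bar>) + integral {pi..2*pi} (\<lambda>t. \<bar>ks t - m\<bar>)"
      by (intro Henstock_Kurzweil_Integration.integral_combine[symmetric] ii continuous_intros ksc) auto
    also have "integral {0..pi} (\<lambda>t. \<bar>ks t - m\<bar>) = integral {0..pi} (\<lambda>t. ks t - m)"
    proof (rule integral_cong)
      fix t assume "t \<in> {0..pi}"
      then have "0 \<le> sin t" by (auto intro: sin_ge_zero)
      then have "m \<le> ks t" unfolding m_def ks_def using kern_mono[OF \<alpha> r, of 0 "sin t"] by simp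
      then show "\<bar>ks t - m\<bar> = ks t - m" by simp
    qed
    also have "integral {pi..2*pi} (\<lambda>t. \<bar>ks t - m\<bar>) = integral {pi..2*pi} (\<lambda>t. m - ks t)"
    proof (rule integral_cong)
      fix t assume "t \<in> {pi..2*pi}"
      then have "sin t \<le> 0" by (auto intro: sin_le0)
      then have "ks t \<le> m" unfolding m_def ks_def using kern_mono[OF \<alpha> r, of "sin t" 0] by simp
      then show "\<bar>ks t - m\<bar> = m - ks t" by simp
    qed
    also have "integral {0..pi} (\<lambda>t. ks t - m) = integral {0..pi} ks - pi * m"
      by (subst integral_diff) (auto intro!: ii ksc continuous_intros)
    also have "integral {pi..2*pi} (\<lambda>t. m - ks t) = pi * m - integral {pi..2*pi} ks"
      by (subst integral_diff) (auto intro!: ii ksc continuous_intros)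
    finally show ?thesis by simp
  qed
  finally have le: "(LINT t:{0..2*pi}|lborel. k t * u t) \<le> integral {0..pi} ks - integral {pi..2*pi} ks" .
  have Ueq: "1/(2*pi) * (integral {0..pi} ks - integral {pi..2*pi} ks) = P_alpha \<alpha> chi (\<i> * complex_of_real (cmod z))"
    unfolding P_alpha_def K_imag[OF r(1)[unfolded r_def]] chi_split(2)[OF ksc[unfolded ks_def r_def]]
    unfolding ks_def r_def ..
  show ?thesis unfolding Peq Ueq[symmetric] using le by (intro mult_left_mono) auto
qed


theorem mainTheorem7:
  fixes \<alpha> :: real and ustar :: "complex \<Rightarrow> real"
  assumes "\<alpha> > -1"
    and "(\<lambda>t. ustar (cis t)) \<in> borel_measurable lborel"
    and "AE t in lborel. t \<in> {0..2*pi} \<longrightarrow> \<bar>ustar (cis t)\<bar> \<le> 1"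
    and "P_alpha \<alpha> ustar 0 = 0"
  shows "(\<forall>z. cmod z < 1 \<longrightarrow>
            P_alpha \<alpha> ustar z \<le> P_alpha \<alpha> chi (\<i> * complex_of_real (cmod z)))
       \<and> (\<forall>r::real. 0 \<le> r \<and> r < 1 \<longrightarrow>
            P_alpha \<alpha> chi (\<i> * complex_of_real r) =
              c_alpha \<alpha> / (2*pi) *
              (4 * (2 + \<alpha>) * (1 - r^2) powr (1 + \<alpha>) * r / (1 + r^2) powr (2 + \<alpha>/2)) *
              hyp3F2 1 (1 + \<alpha>/4) (3/2 + \<alpha>/4) (3/2) (3/2) (4 * r^2 / (1 + r^2)^2))"
    using part1[OF assms] part2[OF assms(1)] by blast

end
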